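(* Let $\mathcal{M}$ be a mesh of $\Omega$, $N\ge 2$, $\delta t=T/N$, and consider any solution of the scheme described in the context. For every dual face $\epsilon$ write $|\mathbf{u}^n_\epsilon|^2=\sum_{i=1}^d(u^n_{\epsilon,i})^2$, and define, for $K\in\mathcal{M}$, $\sigma\in\mathcal{E}(K)$ and $0\le n\le N$, $|K|\,(\rho E_k)^n_K=\frac14\sum_{\sigma\in\mathcal{E}(K)}|D_\sigma|\,\rho^n_{D_\sigma}\,|\mathbf{u}^n_\sigma|^2$, and, for $0\le n\le N-1$, $(G_k)^n_{K,\sigma}=-\frac14\sum_{\epsilon\in\mathcal{E}(D_\sigma),\,\epsilon\subset K}F^n_{\sigma,\epsilon}|\mathbf{u}^n_\epsilon|^2+\frac14\sum_{\epsilon\in\mathcal{E}(D_\sigma),\,\epsilon\not\subset K}F^n_{\sigma,\epsilon}|\mathbf{u}^n_\epsilon|^2$. Then for every $0\le n\le N-2$ and every $K\in\mathcal{M}$, $\frac{|K|}{\delta t}\Big[\big(\rho^{n+2}_Ke^{n+2}_K+(\rho E_k)^{n+1}_K\big)-\big(\rho^{n+1}_Ke^{n+1}_K+(\rho E_k)^n_K\big)\Big]+\sum_{\sigma\in\mathcal{E}(K)}\big(F^{n+1}_{K,\sigma}e^{n+1}_\sigma+(G_k)^n_{K,\sigma}\big)+\sum_{\sigma\in\mathcal{E}(K)\cap\mathcal{E}_{\rm int},\,\sigma=K|L}|\sigma|\,\frac{p^{n+1}_K+p^{n+1}_L}{2}\,\mathbf{u}^{n+1}_\sigma\cdot\ma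thbf{n}_{K,\sigma}=0$.
   Context: Let $\Omega\subset\mathbb{R}^d$ ($1\le d\le 3$) be an open bounded connected polyhedral set and $T>0$. A mesh $\mathcal{M}$ of $\Omega$ is a finite family of compact connected cells with pairwise disjoint interiors whose union is $\overline{\Omega}$; cells are intervals ($d=1$), quadrangles ($d=2$) or hexahedra ($d=3$), and the mesh is conforming. $\mathcal{E}(K)$ is the set of faces of $K$, with $\zeta$ elements ($\zeta=2,4,6$ for $d=1,2,3$); $\mathcal{E}$ is the set of faces, $\mathcal{E}_{\rm int}$ the faces shared by two distinct cells (written $\sigma=K|L$), $\mathcal{E}_{\rm ext}=\mathcal{E}\setminus\mathcal{E}_{\rm int}$; $\mathbf{n}_{K,\sigma}$ unit normal to $\sigma$ outward $K$, $(\mathbf{n}_{K,\sigma})_i$ its $i$-th component; $|A|$ Lebesgue measure. Dual mesh: each $K$ is partitioned into half-diamond cells $D_{K,\sigma}$, $\sigma\in\mathcal{E}(K)$, with $|D_{K,\sigma}|=|K|/\zeta$; $D_\sigma=D_{K,\sigma}\cup D_{L,\sigma}$ if $\sigma=K|L$, $D_\sigma=D_{K,\sigma}$ if $\sigma\in\mathcal{E}_{\rm ext}\cap\mathcal{E}(K)$. A dual face $\epsilon=\sigma|\sigma'$ is the common boundary of two half-diamond cells $D_{K,\sigma},D_{K,\sigma'}$ of a same cell $K$ (connectivity of the reference square/cube), written $\epsilon\subset K$; $\mathcal{E}(D_\sigma)$ is the set of dual faces of $D_\sigma$. Time: $t_n=n\delta t$. The scheme: let $\gamma>1$, $\rho_0,e_0\in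 L^\infty(\Omega)$ with $\rho_0>0$, $e_0>0$, and $\mathbf{u}_0\in L^\infty(\Omega)^d$. A solution is a family of reals $\rho^n_K,e^n_K,p^n_K$ ($K\in\mathcal{M}$) and vectors $\mathbf{u}^n_\sigma=(u^n_{\sigma,1},\dots,u^n_{\sigma,d})$ ($\sigma\in\mathcal{E}$), $0\le n\le N$, such that: (i) $\rho^0_K=\frac{1}{|K|}\int_K\rho_0$, $e^0_K=\frac1{|K|}\int_Ke_0$, $\mathbf{u}^0_\sigma=\frac{1}{|D_\sigma|}\int_{D_\sigma}\mathbf{u}_0$, and $p^n_K=(\gamma-1)\rho^n_Ke^n_K$ for all $n$. (ii) Fluxes: for $\sigma=K|L$, $F^n_{K,\sigma}=|\sigma|\rho^n_\sigma\mathbf{u}^n_\sigma\cdot\mathbf{n}_{K,\sigma}$ with $\rho^n_\sigma$ a convex combination of $\rho^n_K,\rho^n_L$; $F^n_{K,\sigma}=0$ if $\sigma\in\mathcal{E}_{\rm ext}$. Dual densities: $\rho^n_{D_\sigma}=(|D_{K,\sigma}|\rho^n_K+|D_{L,\sigma}|\rho^n_L)/|D_\sigma|$ if $\sigma=K|L$, $\rho^n_{D_\sigma}=\rho^n_K$ if $\sigma\in\mathcal{E}_{\rm ext}\cap\mathcal{E}(K)$. Dual fluxes $F^n_{\sigma,\epsilon}$ ($\epsilon\in\mathcal{E}(D_\sigma)$) satisfy: (a) $F^n_{\sigma,\epsilon}=-F^n_{\sigma',\epsilon}$ for $\epsilon=\sigma|\sigma'$; (b) for every $K$ and $\sigma\in\mathcal{E}(K)$,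 $F^n_{K,\sigma}+\sum_{\epsilon\in\mathcal{E}(D_\sigma),\epsilon\subset K}F^n_{\sigma,\epsilon}=\frac1\zeta\sum_{\sigma'\in\mathcal{E}(K)}F^n_{K,\sigma'}$; (c) for $\epsilon\in\mathcal{E}(D_\sigma)$, $\epsilon\subset K$, $F^n_{\sigma,\epsilon}=\sum_{\sigma'\in\mathcal{E}(K)}\xi_{\epsilon,\sigma'}F^n_{K,\sigma'}$ with real coefficients depending only on the relative positions of $\epsilon,\sigma'$ in the cell (fixed, independent of $K$ and the mesh). (iii) For $0\le n\le N-1$ and $K\in\mathcal{M}$: $\frac{|K|}{\delta t}(\rho^{n+1}_K-\rho^n_K)+\sum_{\sigma\in\mathcal{E}(K)}F^n_{K,\sigma}=0$ and $\frac{|K|}{\delta t}(\rho^{n+1}_Ke^{n+1}_K-\rho^n_Ke^n_K)+\sum_{\sigma\in\mathcal{E}(K)}F^n_{K,\sigma}e^n_\sigma+|K|p^n_K(\operatorname{div}\mathbf{u})^n_K=S^n_K$, where $e^n_\sigma$ is a convex combination of $e^n_K,e^n_L$ for $\sigma=K|L$ and $(\operatorname{div}\mathbf{u})^n_K=\frac1{|K|}\sum_{\sigma\in\mathcal{E}(K)}|\sigma|\mathbf{u}^n_\sigma\cdot\mathbf{n}_{K,\sigma}$. (iv) For $0\le n\le N-1$, $1\le i\le d$ and $\sigma=K|L\in\mathcal{E}_{\rm int}$: $\frac{|D_\sigma|}{\delta t}(\rho^{n+1}_{D_\sigma}u^{n+1}_{\sigma,i}-\rho^n_{D_\sigma}u^n_{\sigma,i})+\sum_{\epsilon\in\mathcal{E}(D_\sigma)}F^n_{\sigma,\epsilon}u^n_{\epsilon,i}+|\sigma|(p^{n+1}_L-p^{n+1}_K)(\mathbf{n}_{K,\sigma})_i=0$,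 where for each dual face $\epsilon=\sigma|\sigma'$, $u^n_{\epsilon,i}$ is a single real which is a convex combination of $u^n_{\sigma,i}$ and $u^n_{\sigma',i}$; for $\sigma\in\mathcal{E}_{\rm ext}\cap\mathcal{E}(K)$, $\mathbf{u}^n_\sigma\cdot\mathbf{n}_{K,\sigma}=0$ for all $n$ and the same equation holds with the pressure term replaced by $g^{n+1}_\sigma(\mathbf{n}_{K,\sigma})_i$ for some real $g^{n+1}_\sigma$. (v) $S^0_K=0$ and, for $0\le n\le N-1$, $S^{n+1}_K=\frac12\sum_{i=1}^d\sum_{\sigma\in\mathcal{E}(K)}R^{n+1}_{\sigma,i}$ with $R^{n+1}_{\sigma,i}=\frac12\frac{|D_\sigma|}{\delta t}\rho^{n+1}_{D_\sigma}(u^{n+1}_{\sigma,i}-u^n_{\sigma,i})^2-\frac12\sum_{\epsilon\in\mathcal{E}(D_\sigma)}F^n_{\sigma,\epsilon}(u^n_{\epsilon,i}-u^n_{\sigma,i})^2+(u^{n+1}_{\sigma,i}-u^n_{\sigma,i})\sum_{\epsilon\in\mathcal{E}(D_\sigma)}F^n_{\sigma,\epsilon}(u^n_{\epsilon,i}-u^n_{\sigma,i})$. *)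

theory Defs
  imports "HOL-Analysis.Analysis"
begin

text \<open>A reference square/cube has faces labelled by (direction, side) :: 'd \<times> bool;
  each cell carries a bijection from its faces onto these reference faces, which
  encodes the connectivity of the reference cell.\<close>

record ('c, 'f, 'd::finite) mesh =
  cells :: "'c set"
  faces_of :: "'c \<Rightarrow> 'f set"
  cell_set :: "'c \<Rightarrow> (real^'d) set"
  half_diamond :: "'c \<Rightarrow> 'f \<Rightarrow> (real^'d) set"
  face_meas :: "'f \<Rightarrow> real"
  normal :: "'c \<Rightarrow> 'f \<Rightarrow> real^'d"
  label :: "'c \<Rightarrow> 'f \<Rightarrow> 'd \<times> bool"

definition zeta :: "('c, 'f, 'd::finite) mesh \<Rightarrow> nat" where
  "zeta M = 2 * CARD('d)"

definition cmeas :: "('c, 'f, 'd::finite) mesh \<Rightarrow> 'c \<Rightarrow> real" where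
  "cmeas M K = measure lebesgue (cell_set M K)"

definition faces :: "('c, 'f, 'd::finite) mesh \<Rightarrow> 'f set" where
  "faces M = (\<Union>K\<in>cells M. faces_of M K)"

definition cells_of :: "('c, 'f, 'd::finite) mesh \<Rightarrow> 'f \<Rightarrow> 'c set" where
  "cells_of M \<sigma> = {K \<in> cells M. \<sigma> \<in> faces_of M K}"

definition interior_faces :: "('c, 'f, 'd::finite) mesh \<Rightarrow> 'f set" where
  "interior_faces M = {\<sigma> \<in> faces M. \<exists>K\<in>cells M. \<exists>L\<in>cells M.
      K \<noteq> L \<and> \<sigma> \<in> faces_of M K \<and> \<sigma> \<in> faces_of M L}"

definition exterior_faces :: "('c, 'f, 'd::finite) mesh \<Rightarrow> 'f set" where
  "exterior_faces M = faces M - interior_faces M"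

definition neighbor :: "('c, 'f, 'd::finite) mesh \<Rightarrow> 'c \<Rightarrow> 'f \<Rightarrow> 'c" where
  "neighbor M K \<sigma> = (THE L. L \<in> cells M \<and> L \<noteq> K \<and> \<sigma> \<in> faces_of M L)"

definition hd_meas :: "('c, 'f, 'd::finite) mesh \<Rightarrow> 'c \<Rightarrow> 'f \<Rightarrow> real" where
  "hd_meas M K \<sigma> = cmeas M K / real (zeta M)"

definition dual_meas :: "('c, 'f, 'd::finite) mesh \<Rightarrow> 'f \<Rightarrow> real" where
  "dual_meas M \<sigma> = (\<Sum>K\<in>cells_of M \<sigma>. hd_meas M K \<sigma>)"

definition dual_set :: "('c, 'f, 'd::finite) mesh \<Rightarrow> 'f \<Rightarrow> (real^'d) set" where
  "dual_set M \<sigma> = (\<Union>K\<in>cells_of M \<sigma>. half_diamond M K \<sigma>)"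

text \<open>Dual face \<epsilon> = \<sigma>|\<sigma>' inside K: the half-diamond cells D_{K,\<sigma>} and D_{K,\<sigma>'} share a
  face, i.e. \<sigma>, \<sigma>' are distinct faces of K which are not opposite in the reference
  square/cube (for d = 1 the two halves of the interval share the midpoint).\<close>
definition adj :: "('c, 'f, 'd::finite) mesh \<Rightarrow> 'c \<Rightarrow> 'f \<Rightarrow> 'f \<Rightarrow> bool" where
  "adj M K \<sigma> \<sigma>' \<longleftrightarrow> K \<in> cells M \<and> \<sigma> \<in> faces_of M K \<and> \<sigma>' \<in> faces_of M K \<and> \<sigma> \<noteq> \<sigma>' \<and>
     (CARD('d) = 1 \<or> fst (label M K \<sigma>) \<noteq> fst (label M K \<sigma>'))"

text \<open>E(D_\<sigma>): the dual face \<epsilon> = \<sigma>|\<sigma>' \<subset> K is represented by the pair (K, \<sigma>').\<close>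
definition dual_faces :: "('c, 'f, 'd::finite) mesh \<Rightarrow> 'f \<Rightarrow> ('c \<times> 'f) set" where
  "dual_faces M \<sigma> = {(K, \<sigma>'). K \<in> cells_of M \<sigma> \<and> adj M K \<sigma> \<sigma>'}"

definition omega :: "('c, 'f, 'd::finite) mesh \<Rightarrow> (real^'d) set" where
  "omega M = interior (\<Union>K\<in>cells M. cell_set M K)"

definition is_mesh :: "('c, 'f, 'd::finite) mesh \<Rightarrow> bool" where
  "is_mesh M \<longleftrightarrow>
     CARD('d) \<le> 3 \<and>
     finite (cells M) \<and> cells M \<noteq> {} \<and>
     connected (omega M) \<and>
     closure (omega M) = (\<Union>K\<in>cells M. cell_set M K) \<and>
     (\<forall>K\<in>cells M. compact (cell_set M K) \<and> connected (cell_set M K) \<and> cmeas M K > 0) \<and>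
     (\<forall>K\<in>cells M. \<forall>L\<in>cells M. K \<noteq> L \<longrightarrow>
        interior (cell_set M K) \<inter> interior (cell_set M L) = {}) \<and>
     (\<forall>K\<in>cells M. bij_betw (label M K) (faces_of M K) UNIV) \<and>
     (\<forall>\<sigma>\<in>faces M. face_meas M \<sigma> > 0 \<and> card (cells_of M \<sigma>) \<le> 2) \<and>
     (\<forall>K\<in>cells M. \<forall>\<sigma>\<in>faces_of M K. norm (normal M K \<sigma>) = 1) \<and>
     (\<forall>K\<in>cells M. \<forall>L\<in>cells M. \<forall>\<sigma>. K \<noteq> L \<and> \<sigma> \<in> faces_of M K \<and> \<sigma> \<in> faces_of M L \<longrightarrow>
        normal M L \<sigma> = - normal M K \<sigma>) \<and>
     (\<forall>K\<in>cells M.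
        (\<Union>\<sigma>\<in>faces_of M K. half_diamond M K \<sigma>) = cell_set M K \<and>
        (\<forall>\<sigma>\<in>faces_of M K. half_diamond M K \<sigma> \<in> sets lebesgue \<and>
            measure lebesgue (half_diamond M K \<sigma>) = cmeas M K / real (zeta M)) \<and>
        (\<forall>\<sigma>\<in>faces_of M K. \<forall>\<sigma>'\<in>faces_of M K. \<sigma> \<noteq> \<sigma>' \<longrightarrow>
            interior (half_diamond M K \<sigma>) \<inter> interior (half_diamond M K \<sigma>') = {}))"

record ('c, 'f, 'd::finite) solution =
  rho :: "nat \<Rightarrow> 'c \<Rightarrow> real"
  ener :: "nat \<Rightarrow> 'c \<Rightarrow> real"
  pres :: "nat \<Rightarrow> 'c \<Rightarrow> real"
  vel :: "nat \<Rightarrow> 'f \<Rightarrow> real^'d"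
  rho_face :: "nat \<Rightarrow> 'f \<Rightarrow> real"
  ener_face :: "nat \<Rightarrow> 'f \<Rightarrow> real"
  dual_flux :: "nat \<Rightarrow> 'f \<Rightarrow> 'c \<Rightarrow> 'f \<Rightarrow> real"   \<comment> \<open>F^n_{\<sigma>,\<epsilon>}, \<epsilon> = \<sigma>|\<sigma>' \<subset> K, as dual_flux n \<sigma> K \<sigma>'\<close>
  vel_dual :: "nat \<Rightarrow> 'c \<Rightarrow> 'f \<Rightarrow> 'f \<Rightarrow> real^'d"  \<comment> \<open>u^n_\<epsilon>, \<epsilon> = \<sigma>|\<sigma>' \<subset> K, as vel_dual n K \<sigma> \<sigma>'\<close>
  bnd_pres :: "nat \<Rightarrow> 'f \<Rightarrow> real"

definition convex_comb :: "real \<Rightarrow> real \<Rightarrow> real \<Rightarrow> bool" where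
  "convex_comb x a b \<longleftrightarrow> (\<exists>t. 0 \<le> t \<and> t \<le> 1 \<and> x = t * a + (1 - t) * b)"

definition sqn :: "real^'d \<Rightarrow> real" where
  "sqn v = (\<Sum>i\<in>UNIV. (v $ i)^2)"

definition flux :: "('c, 'f, 'd::finite) mesh \<Rightarrow> ('c, 'f, 'd) solution \<Rightarrow> nat \<Rightarrow> 'c \<Rightarrow> 'f \<Rightarrow> real" where
  "flux M S n K \<sigma> = (if \<sigma> \<in> interior_faces M
      then face_meas M \<sigma> * rho_face S n \<sigma> * (vel S n \<sigma> \<bullet> normal M K \<sigma>) else 0)"

definition rho_dual :: "('c, 'f, 'd::finite) mesh \<Rightarrow> ('c, 'f, 'd) solution \<Rightarrow> nat \<Rightarrow> 'f \<Rightarrow> real" where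
  "rho_dual M S n \<sigma> = (\<Sum>K\<in>cells_of M \<sigma>. hd_meas M K \<sigma> * rho S n K) / dual_meas M \<sigma>"

definition div_u :: "('c, 'f, 'd::finite) mesh \<Rightarrow> ('c, 'f, 'd) solution \<Rightarrow> nat \<Rightarrow> 'c \<Rightarrow> real" where
  "div_u M S n K = (\<Sum>\<sigma>\<in>faces_of M K. face_meas M \<sigma> * (vel S n \<sigma> \<bullet> normal M K \<sigma>)) / cmeas M K"

text \<open>R^{n+1}_{\<sigma>,i} (argument n).\<close>
definition Rterm :: "('c, 'f, 'd::finite) mesh \<Rightarrow> ('c, 'f, 'd) solution \<Rightarrow> real \<Rightarrow> nat \<Rightarrow> 'f \<Rightarrow> 'd \<Rightarrow> real" where
  "Rterm M S dt n \<sigma> i =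
     1/2 * dual_meas M \<sigma> / dt * rho_dual M S (Suc n) \<sigma> * (vel S (Suc n) \<sigma> $ i - vel S n \<sigma> $ i)^2
     - 1/2 * (\<Sum>(K, \<sigma>')\<in>dual_faces M \<sigma>. dual_flux S n \<sigma> K \<sigma>' * (vel_dual S n K \<sigma> \<sigma>' $ i - vel S n \<sigma> $ i)^2)
     + (vel S (Suc n) \<sigma> $ i - vel S n \<sigma> $ i) *
       (\<Sum>(K, \<sigma>')\<in>dual_faces M \<sigma>. dual_flux S n \<sigma> K \<sigma>' * (vel_dual S n K \<sigma> \<sigma>' $ i - vel S n \<sigma> $ i))"

definition source :: "('c, 'f, 'd::finite) mesh \<Rightarrow> ('c, 'f, 'd) solution \<Rightarrow> real \<Rightarrow> nat \<Rightarrow> 'c \<Rightarrow> real" where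
  "source M S dt n K = (case n of 0 \<Rightarrow> 0
     | Suc m \<Rightarrow> 1/2 * (\<Sum>i\<in>UNIV. \<Sum>\<sigma>\<in>faces_of M K. Rterm M S dt m \<sigma> i))"

definition is_solution :: "('c, 'f, 'd::finite) mesh \<Rightarrow> real \<Rightarrow> real \<Rightarrow> nat \<Rightarrow>
    (real^'d \<Rightarrow> real) \<Rightarrow> (real^'d \<Rightarrow> real) \<Rightarrow> (real^'d \<Rightarrow> real^'d) \<Rightarrow> ('c, 'f, 'd) solution \<Rightarrow> bool" where
  "is_solution M \<gamma> T N rho0 e0 u0 S \<longleftrightarrow>
    (let dt = T / real N in
     \<comment> \<open>(i) initialisation and equation of state\<close>
     (\<forall>K\<in>cells M. rho S 0 K = (LINT x:cell_set M K|lebesgue. rho0 x) / cmeas M K \<and>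
                  ener S 0 K = (LINT x:cell_set M K|lebesgue. e0 x) / cmeas M K) \<and>
     (\<forall>\<sigma>\<in>faces M. vel S 0 \<sigma> = (1 / dual_meas M \<sigma>) *\<^sub>R (LINT x:dual_set M \<sigma>|lebesgue. u0 x)) \<and>
     (\<forall>n\<le>N. \<forall>K\<in>cells M. pres S n K = (\<gamma> - 1) * rho S n K * ener S n K) \<and>
     \<comment> \<open>(ii) face densities / energies, dual fluxes\<close>
     (\<forall>n<N. \<forall>\<sigma>\<in>interior_faces M. \<forall>K\<in>cells_of M \<sigma>. \<forall>L\<in>cells_of M \<sigma>. K \<noteq> L \<longrightarrow>
        convex_comb (rho_face S n \<sigma>) (rho S n K) (rho S n L) \<and>
        convex_comb (ener_face S n \<sigma>) (ener S n K) (ener S n L)) \<and>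
     (\<forall>n<N. \<forall>K \<sigma> \<sigma>'. adj M K \<sigma> \<sigma>' \<longrightarrow> dual_flux S n \<sigma> K \<sigma>' = - dual_flux S n \<sigma>' K \<sigma>) \<and>
     (\<forall>n<N. \<forall>K\<in>cells M. \<forall>\<sigma>\<in>faces_of M K.
        flux M S n K \<sigma> + (\<Sum>\<sigma>'\<in>{\<sigma>'. adj M K \<sigma> \<sigma>'}. dual_flux S n \<sigma> K \<sigma>')
          = (1 / real (zeta M)) * (\<Sum>\<sigma>'\<in>faces_of M K. flux M S n K \<sigma>')) \<and>
     (\<exists>\<xi> :: 'd \<times> bool \<Rightarrow> 'd \<times> bool \<Rightarrow> 'd \<times> bool \<Rightarrow> real.
        \<forall>n<N. \<forall>K \<sigma> \<sigma>''. adj M K \<sigma> \<sigma>'' \<longrightarrow>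
          dual_flux S n \<sigma> K \<sigma>'' =
            (\<Sum>\<sigma>'\<in>faces_of M K. \<xi> (label M K \<sigma>) (label M K \<sigma>'') (label M K \<sigma>') * flux M S n K \<sigma>')) \<and>
     \<comment> \<open>(iii) mass and internal energy balances\<close>
     (\<forall>n<N. \<forall>K\<in>cells M.
        cmeas M K / dt * (rho S (Suc n) K - rho S n K) + (\<Sum>\<sigma>\<in>faces_of M K. flux M S n K \<sigma>) = 0 \<and>
        cmeas M K / dt * (rho S (Suc n) K * ener S (Suc n) K - rho S n K * ener S n K)
          + (\<Sum>\<sigma>\<in>faces_of M K. flux M S n K \<sigma> * ener_face S n \<sigma>)
          + cmeas M K * pres S n K * div_u M S n K = source M S dt n K) \<and>
     \<comment> \<open>(iv) momentum balance\<close>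
     (\<forall>n<N. \<forall>K \<sigma> \<sigma>'. adj M K \<sigma> \<sigma>' \<longrightarrow>
        vel_dual S n K \<sigma> \<sigma>' = vel_dual S n K \<sigma>' \<sigma> \<and>
        (\<forall>i. convex_comb (vel_dual S n K \<sigma> \<sigma>' $ i) (vel S n \<sigma> $ i) (vel S n \<sigma>' $ i))) \<and>
     (\<forall>n<N. \<forall>i. \<forall>\<sigma>\<in>interior_faces M. \<forall>K\<in>cells_of M \<sigma>. \<forall>L\<in>cells_of M \<sigma>. K \<noteq> L \<longrightarrow>
        dual_meas M \<sigma> / dt * (rho_dual M S (Suc n) \<sigma> * (vel S (Suc n) \<sigma> $ i) - rho_dual M S n \<sigma> * (vel S n \<sigma> $ i))
        + (\<Sum>(K', \<sigma>')\<in>dual_faces M \<sigma>. dual_flux S n \<sigma> K' \<sigma>' * (vel_dual S n K' \<sigma> \<sigma>' $ i))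
        + face_meas M \<sigma> * (pres S (Suc n) L - pres S (Suc n) K) * (normal M K \<sigma> $ i) = 0) \<and>
     (\<forall>n\<le>N. \<forall>K\<in>cells M. \<forall>\<sigma>\<in>faces_of M K \<inter> exterior_faces M. vel S n \<sigma> \<bullet> normal M K \<sigma> = 0) \<and>
     (\<forall>n<N. \<forall>i. \<forall>K\<in>cells M. \<forall>\<sigma>\<in>faces_of M K \<inter> exterior_faces M.
        dual_meas M \<sigma> / dt * (rho_dual M S (Suc n) \<sigma> * (vel S (Suc n) \<sigma> $ i) - rho_dual M S n \<sigma> * (vel S n \<sigma> $ i))
        + (\<Sum>(K', \<sigma>')\<in>dual_faces M \<sigma>. dual_flux S n \<sigma> K' \<sigma>' * (vel_dual S n K' \<sigma> \<sigma>' $ i))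
        + bnd_pres S (Suc n) \<sigma> * (normal M K \<sigma> $ i) = 0))"

text \<open>(\<rho> E_k)^n_K, i.e. the defining sum divided by |K|.\<close>
definition kin_energy :: "('c, 'f, 'd::finite) mesh \<Rightarrow> ('c, 'f, 'd) solution \<Rightarrow> nat \<Rightarrow> 'c \<Rightarrow> real" where
  "kin_energy M S n K =
     (1/4 * (\<Sum>\<sigma>\<in>faces_of M K. dual_meas M \<sigma> * rho_dual M S n \<sigma> * sqn (vel S n \<sigma>))) / cmeas M K"

definition Gk :: "('c, 'f, 'd::finite) mesh \<Rightarrow> ('c, 'f, 'd) solution \<Rightarrow> nat \<Rightarrow> 'c \<Rightarrow> 'f \<Rightarrow> real" where
  "Gk M S n K \<sigma> =
     - 1/4 * (\<Sum>(L, \<sigma>')\<in>{(L, \<sigma>') \<in> dual_faces M \<sigma>. L = K}.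
                 dual_flux S n \<sigma> L \<sigma>' * sqn (vel_dual S n L \<sigma> \<sigma>'))
     + 1/4 * (\<Sum>(L, \<sigma>')\<in>{(L, \<sigma>') \<in> dual_faces M \<sigma>. L \<noteq> K}.
                 dual_flux S n \<sigma> L \<sigma>' * sqn (vel_dual S n L \<sigma> \<sigma>'))"

end

theory Submission
  imports Defs
begin


lemma mesh_facts: "is_mesh M \<Longrightarrow> finite (cells M) \<and>
     (\<forall>K\<in>cells M. cmeas M K > 0) \<and>
     (\<forall>K\<in>cells M. bij_betw (label M K) (faces_of M K) UNIV) \<and>
     (\<forall>\<sigma>\<in>faces M. card (cells_of M \<sigma>) \<le> 2) \<and>
     (\<forall>K\<in>cells M. \<forall>L\<in>cells M. \<forall>\<sigma>. K \<noteq> L \<and> \<sigma> \<in> faces_of M K \<and> \<sigma> \<in> faces_of M L \<longrightarrow>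
        normal M L \<sigma> = - normal M K \<sigma>)"
  unfolding is_mesh_def by (intro conjI; elim conjE; assumption?; fast)

lemma mesh_card: "is_mesh M \<Longrightarrow> \<sigma> \<in> faces M \<Longrightarrow> card (cells_of M \<sigma>) \<le> 2"
  by (rule bspec[OF mesh_facts[THEN conjunct2, THEN conjunct2, THEN conjunct2, THEN conjunct1]])

lemma mesh_normal: "is_mesh M \<Longrightarrow> K \<in> cells M \<Longrightarrow> L \<in> cells M \<Longrightarrow> K \<noteq> L \<Longrightarrow>
   \<sigma> \<in> faces_of M K \<Longrightarrow> \<sigma> \<in> faces_of M L \<Longrightarrow> normal M L \<sigma> = - normal M K \<sigma>"
  apply (drule mesh_facts[THEN conjunct2, THEN conjunct2, THEN conjunct2, THEN conjunct2])
  apply (drule bspec[where x=K], assumption) apply (drule bspec[where x=L], assumption) apply (drule spec[where x=\<sigma>]) apply (erule mp) by simp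

lemma mesh_cmeas: "is_mesh M \<Longrightarrow> K \<in> cells M \<Longrightarrow> cmeas M K > 0"
  by (rule bspec[OF mesh_facts[THEN conjunct2, THEN conjunct1]])

lemma fin_faces: "is_mesh M \<Longrightarrow> K \<in> cells M \<Longrightarrow> finite (faces_of M K)"
  apply (drule mesh_facts[THEN conjunct2, THEN conjunct2, THEN conjunct1])
  apply (drule bspec, assumption) apply (drule bij_betw_finite) by simp

lemma fin_cells_of: "is_mesh M \<Longrightarrow> finite (cells_of M \<sigma>)"
  apply (drule mesh_facts[THEN conjunct1]) unfolding cells_of_def by simp

lemma fin_adj: "is_mesh M \<Longrightarrow> finite {\<sigma>'. adj M K \<sigma> \<sigma>'}"
proof (cases "K \<in> cells M")
  case True
  assume m: "is_mesh M"
  have "{\<sigma>'. adj M K \<sigma> \<sigma>'} \<subseteq> faces_of M K" by (auto simp: adj_def)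
  then show ?thesis using fin_faces[OF m True] by (rule finite_subset)
next
  case False
  then show ?thesis by (simp add: adj_def)
qed

lemma dual_faces_Sigma: "dual_faces M \<sigma> = Sigma (cells_of M \<sigma>) (\<lambda>K. {\<sigma>'. adj M K \<sigma> \<sigma>'})"
  unfolding dual_faces_def by auto

lemma fin_dual: "is_mesh M \<Longrightarrow> finite (dual_faces M \<sigma>)"
  unfolding dual_faces_Sigma apply (rule finite_SigmaI) apply (erule fin_cells_of) by (erule fin_adj)

lemma neighbor_prop:
  assumes m: "is_mesh M" and K: "K \<in> cells M" and s: "\<sigma> \<in> faces_of M K" and i: "\<sigma> \<in> interior_faces M"
  shows "neighbor M K \<sigma> \<in> cells_of M \<sigma> \<and> neighbor M K \<sigma> \<noteq> K \<and> cells_of M \<sigma> = {K, neighbor M K \<sigma>}"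
proof -
  obtain K1 K2 where k: "K1 \<in> cells M" "K2 \<in> cells M" "K1 \<noteq> K2" "\<sigma> \<in> faces_of M K1" "\<sigma> \<in> faces_of M K2"
    using i unfolding interior_faces_def by auto
  have sf: "\<sigma> \<in> faces M" using K s unfolding faces_def by auto
  have card: "card (cells_of M \<sigma>) \<le> 2" using mesh_card[OF m sf] .
  have fin: "finite (cells_of M \<sigma>)" using fin_cells_of[OF m] .
  obtain L where L: "L \<in> cells M" "L \<noteq> K" "\<sigma> \<in> faces_of M L"
  proof (cases "K1 = K")
    case True
    then show ?thesis using that[of K2] k by auto
  next
    case False
    then show ?thesis using that[of K1] k by auto
  qed
  have uniq: "L' = L" if "L' \<in> cells M" "L' \<noteq> K" "\<sigma> \<in> faces_of M L'" for L'
  proof (rule ccontr)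
    assume ne: "L' \<noteq> L"
    have sub: "{K, L, L'} \<subseteq> cells_of M \<sigma>" using that L K s by (auto simp: cells_of_def)
    have "card {K, L, L'} \<le> card (cells_of M \<sigma>)" by (rule card_mono[OF fin sub])
    moreover have "card {K, L, L'} = 3" using ne L(2) that(2) by auto
    ultimately show False using card by linarith
  qed
  have nb: "neighbor M K \<sigma> = L" unfolding neighbor_def
    apply (rule the_equality)
    using L apply simp
    apply (elim conjE) apply (rule uniq) by assumption+
  have "cells_of M \<sigma> = {K, L}"
  proof
    show "{K, L} \<subseteq> cells_of M \<sigma>" using L K s by (auto simp: cells_of_def)
    show "cells_of M \<sigma> \<subseteq> {K, L}" using uniq by (auto simp: cells_of_def)
  qed
  then show ?thesis using nb L by (auto simp: cells_of_def)
qed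

lemma flux_sum_zero:
  assumes m: "is_mesh M" and sf: "\<sigma> \<in> faces M"
  shows "(\<Sum>K\<in>cells_of M \<sigma>. flux M S n K \<sigma>) = 0"
proof (cases "\<sigma> \<in> interior_faces M")
  case True
  obtain K1 K2 where k: "K1 \<in> cells M" "K2 \<in> cells M" "K1 \<noteq> K2" "\<sigma> \<in> faces_of M K1" "\<sigma> \<in> faces_of M K2"
    using True unfolding interior_faces_def by blast
  have c: "cells_of M \<sigma> = {K1, neighbor M K1 \<sigma>}" and nb: "neighbor M K1 \<sigma> \<noteq> K1"
      "neighbor M K1 \<sigma> \<in> cells_of M \<sigma>"
    using neighbor_prop[OF m k(1) k(4) True] by auto
  have "normal M (neighbor M K1 \<sigma>) \<sigma> = - normal M K1 \<sigma>"
    using mesh_normal[OF m k(1) _ nb(1)[symmetric] k(4)] nb(2) by (auto simp: cells_of_def)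
  then show ?thesis using c nb True by (simp add: flux_def inner_minus_right)
next
  case False
  then show ?thesis by (simp add: flux_def)
qed


lemma kin_alg:
  fixes D :: "('a \<times> 'b) set" and f g :: "'a \<Rightarrow> 'b \<Rightarrow> real"
  assumes fin: "finite D"
    and Z: "(\<Sum>(k,s)\<in>D. f k s) = - c * (r1 - r0)"
    and mom: "c * (r1 * a - r0 * b) + (\<Sum>(k,s)\<in>D. f k s * g k s) + P = 0"
  shows "1/2 * c * (r1 * a^2 - r0 * b^2) + 1/2 * (\<Sum>(k,s)\<in>D. f k s * (g k s)^2)
    + (1/2 * c * r1 * (a - b)^2 - 1/2 * (\<Sum>(k,s)\<in>D. f k s * (g k s - b)^2)
       + (a - b) * (\<Sum>(k,s)\<in>D. f k s * (g k s - b))) + P * a = 0"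
proof -
  define X where "X = (\<Sum>(k,s)\<in>D. f k s * g k s)"
  define Y where "Y = (\<Sum>(k,s)\<in>D. f k s * (g k s)^2)"
  define Zs where "Zs = (\<Sum>(k,s)\<in>D. f k s)"
  have e1: "(\<Sum>(k,s)\<in>D. f k s * (g k s - b)^2) = Y - 2 * b * X + b^2 * Zs"
    unfolding X_def Y_def Zs_def
    by (simp add: split_def power2_diff algebra_simps sum.distrib sum_subtractf sum_distrib_left)
  have e2: "(\<Sum>(k,s)\<in>D. f k s * (g k s - b)) = X - b * Zs"
    unfolding X_def Zs_def
    by (simp add: split_def algebra_simps sum_subtractf sum_distrib_left)
  have P: "P = - c * (r1 * a - r0 * b) - X" using mom unfolding X_def by linarith
  have Zs: "Zs = - c * (r1 - r0)" using Z unfolding Zs_def .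
  show ?thesis unfolding e1 e2 P Y_def[symmetric] X_def[symmetric] Zs
    by (simp add: power2_eq_square algebra_simps)
qed



lemma zeta_pos: "real (zeta M) > 0"
  unfolding zeta_def by simp

lemma dual_mass:
  assumes m: "is_mesh M" and sf: "\<sigma> \<in> faces M" and dt: "dt > 0"
   and mass: "\<forall>K\<in>cells M. cmeas M K / dt * (rho S (Suc n) K - rho S n K) + (\<Sum>\<sigma>\<in>faces_of M K. flux M S n K \<sigma>) = 0"
   and b: "\<forall>K\<in>cells M. \<forall>\<sigma>\<in>faces_of M K. flux M S n K \<sigma> + (\<Sum>\<sigma>'\<in>{\<sigma>'. adj M K \<sigma> \<sigma>'}. dual_flux S n \<sigma> K \<sigma>')
          = (1 / real (zeta M)) * (\<Sum>\<sigma>'\<in>faces_of M K. flux M S n K \<sigma>')"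
  shows "(\<Sum>(K',\<sigma>')\<in>dual_faces M \<sigma>. dual_flux S n \<sigma> K' \<sigma>')
      = - (dual_meas M \<sigma> / dt) * (rho_dual M S (Suc n) \<sigma> - rho_dual M S n \<sigma>)"
proof -
  have fin: "finite (cells_of M \<sigma>)" using fin_cells_of[OF m] .
  have ne: "cells_of M \<sigma> \<noteq> {}" using sf unfolding faces_def cells_of_def by auto
  have dpos: "dual_meas M \<sigma> > 0" unfolding dual_meas_def hd_meas_def
    apply (rule sum_pos[OF fin ne])
    using mesh_cmeas[OF m] zeta_pos[of M] by (auto simp: cells_of_def)
  have e1: "dual_meas M \<sigma> * (rho_dual M S (Suc n) \<sigma> - rho_dual M S n \<sigma>)
      = (\<Sum>K\<in>cells_of M \<sigma>. hd_meas M K \<sigma> * (rho S (Suc n) K - rho S n K))"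
    using dpos by (simp add: rho_dual_def right_diff_distrib sum_subtractf)
  have each: "hd_meas M K \<sigma> * (rho S (Suc n) K - rho S n K)
      = - dt * (flux M S n K \<sigma> + (\<Sum>\<sigma>'\<in>{\<sigma>'. adj M K \<sigma> \<sigma>'}. dual_flux S n \<sigma> K \<sigma>'))"
    if K: "K \<in> cells_of M \<sigma>" for K
  proof -
    have Kc: "K \<in> cells M" and sK: "\<sigma> \<in> faces_of M K" using K by (auto simp: cells_of_def)
    have m1: "cmeas M K * (rho S (Suc n) K - rho S n K) = - dt * (\<Sum>\<sigma>\<in>faces_of M K. flux M S n K \<sigma>)"
      using mass Kc dt by (auto simp: field_simps)
    have b1: "flux M S n K \<sigma> + (\<Sum>\<sigma>'\<in>{\<sigma>'. adj M K \<sigma> \<sigma>'}. dual_flux S n \<sigma> K \<sigma>')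
          = (1 / real (zeta M)) * (\<Sum>\<sigma>'\<in>faces_of M K. flux M S n K \<sigma>')"
      using b Kc sK by blast
    have "hd_meas M K \<sigma> * (rho S (Suc n) K - rho S n K) = (cmeas M K * (rho S (Suc n) K - rho S n K)) / real (zeta M)"
      by (simp add: hd_meas_def)
    also have "\<dots> = - dt * ((1 / real (zeta M)) * (\<Sum>\<sigma>\<in>faces_of M K. flux M S n K \<sigma>))"
      unfolding m1 by simp
    finally show ?thesis unfolding b1 .
  qed
  have "(\<Sum>(K',\<sigma>')\<in>dual_faces M \<sigma>. dual_flux S n \<sigma> K' \<sigma>')
      = (\<Sum>K\<in>cells_of M \<sigma>. \<Sum>\<sigma>'\<in>{\<sigma>'. adj M K \<sigma> \<sigma>'}. dual_flux S n \<sigma> K \<sigma>')"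
    unfolding dual_faces_Sigma
    by (rule sum.Sigma[symmetric]) (use fin fin_adj[OF m] in auto)
  also have "\<dots> = (\<Sum>K\<in>cells_of M \<sigma>. flux M S n K \<sigma> + (\<Sum>\<sigma>'\<in>{\<sigma>'. adj M K \<sigma> \<sigma>'}. dual_flux S n \<sigma> K \<sigma>'))"
    using flux_sum_zero[OF m sf, of S n] by (simp add: sum.distrib)
  also have "\<dots> = (\<Sum>K\<in>cells_of M \<sigma>. - (1/dt) * (hd_meas M K \<sigma> * (rho S (Suc n) K - rho S n K)))"
    apply (rule sum.cong[OF refl]) using each dt by simp
  also have "\<dots> = - (1/dt) * (dual_meas M \<sigma> * (rho_dual M S (Suc n) \<sigma> - rho_dual M S n \<sigma>))"
    unfolding e1 by (simp add: sum_distrib_left)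
  finally show ?thesis by simp
qed

lemma gk_zero:
  fixes F V :: "'f \<Rightarrow> 'f \<Rightarrow> real"
  assumes m: "is_mesh M" and K: "K \<in> cells M"
    and anti: "\<forall>\<sigma> \<sigma>'. adj M K \<sigma> \<sigma>' \<longrightarrow> F \<sigma> \<sigma>' = - F \<sigma>' \<sigma>"
    and sym: "\<forall>\<sigma> \<sigma>'. adj M K \<sigma> \<sigma>' \<longrightarrow> V \<sigma> \<sigma>' = V \<sigma>' \<sigma>"
  shows "(\<Sum>\<sigma>\<in>faces_of M K. \<Sum>\<sigma>'\<in>{\<sigma>'. adj M K \<sigma> \<sigma>'}. F \<sigma> \<sigma>' * V \<sigma> \<sigma>') = 0"
proof -
  define A where "A = {(\<sigma>, \<sigma>'). adj M K \<sigma> \<sigma>'}"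
  have finF: "finite (faces_of M K)" using fin_faces[OF m K] .
  have AS: "A = Sigma (faces_of M K) (\<lambda>\<sigma>. {\<sigma>'. adj M K \<sigma> \<sigma>'})" unfolding A_def by (auto simp: adj_def)
  have finA: "finite A" unfolding AS using finF fin_adj[OF m] by auto
  have s1: "(\<Sum>\<sigma>\<in>faces_of M K. \<Sum>\<sigma>'\<in>{\<sigma>'. adj M K \<sigma> \<sigma>'}. F \<sigma> \<sigma>' * V \<sigma> \<sigma>') = (\<Sum>(a,b)\<in>A. F a b * V a b)"
    unfolding AS by (rule sum.Sigma) (use finF fin_adj[OF m] in auto)
  have sw: "prod.swap ` A = A" unfolding A_def by (auto simp: adj_def image_iff)
  have "(\<Sum>(a,b)\<in>A. F a b * V a b) = (\<Sum>x\<in>prod.swap ` A. (\<lambda>(a,b). F a b * V a b) x)" using sw by simp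
  also have "\<dots> = (\<Sum>x\<in>A. (\<lambda>(a,b). F a b * V a b) (prod.swap x))"
    by (subst sum.reindex) (auto simp: inj_on_def)
  also have "\<dots> = (\<Sum>(a,b)\<in>A. - (F a b * V a b))"
  proof (rule sum.cong[OF refl])
    fix x assume "x \<in> A"
    then obtain a b where x: "x = (a, b)" and ab: "adj M K a b" unfolding A_def by auto
    have ba: "adj M K b a" using ab unfolding adj_def by auto
    have "F b a = - F a b" using anti[rule_format, OF ba] .
    moreover have "V b a = V a b" using sym[rule_format, OF ba] .
    ultimately show "(\<lambda>(a,b). F a b * V a b) (prod.swap x) = (\<lambda>(a,b). - (F a b * V a b)) x"
      using x by simp
  qed
  also have "\<dots> = - (\<Sum>(a,b)\<in>A. F a b * V a b)" by (simp add: split_def sum_negf)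
  finally show ?thesis unfolding s1 by simp
qed



lemma sigma_identity:
  fixes S :: "('c,'f,'d::finite) solution" and M :: "('c,'f,'d) mesh"
  assumes fin: "finite (dual_faces M \<sigma>)"
    and dm: "(\<Sum>(K',\<sigma>')\<in>dual_faces M \<sigma>. dual_flux S n \<sigma> K' \<sigma>') = - (dual_meas M \<sigma> / dt) * (rho_dual M S (Suc n) \<sigma> - rho_dual M S n \<sigma>)"
    and mom: "\<forall>i. dual_meas M \<sigma> / dt * (rho_dual M S (Suc n) \<sigma> * (vel S (Suc n) \<sigma> $ i) - rho_dual M S n \<sigma> * (vel S n \<sigma> $ i))
        + (\<Sum>(K', \<sigma>')\<in>dual_faces M \<sigma>. dual_flux S n \<sigma> K' \<sigma>' * (vel_dual S n K' \<sigma> \<sigma>' $ i))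
        + q * (nv $ i) = 0"
  shows "1/2 * (dual_meas M \<sigma> / dt) * (rho_dual M S (Suc n) \<sigma> * sqn (vel S (Suc n) \<sigma>) - rho_dual M S n \<sigma> * sqn (vel S n \<sigma>))
     + 1/2 * (\<Sum>(K',\<sigma>')\<in>dual_faces M \<sigma>. dual_flux S n \<sigma> K' \<sigma>' * sqn (vel_dual S n K' \<sigma> \<sigma>'))
     + (\<Sum>i\<in>UNIV. Rterm M S dt n \<sigma> i) + q * (vel S (Suc n) \<sigma> \<bullet> nv) = 0"
proof -
  define D where "D = dual_faces M \<sigma>"
  define c where "c = dual_meas M \<sigma> / dt"
  define r1 where "r1 = rho_dual M S (Suc n) \<sigma>"
  define r0 where "r0 = rho_dual M S n \<sigma>"
  define f where "f = (\<lambda>K' \<sigma>'. dual_flux S n \<sigma> K' \<sigma>')"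
  define g where "g = (\<lambda>i K' \<sigma>'. vel_dual S n K' \<sigma> \<sigma>' $ i)"
  define a where "a = (\<lambda>i. vel S (Suc n) \<sigma> $ i)"
  define b where "b = (\<lambda>i. vel S n \<sigma> $ i)"
  have finD: "finite D" using fin unfolding D_def .
  have Z: "(\<Sum>(k,s)\<in>D. f k s) = - c * (r1 - r0)" using dm unfolding D_def f_def c_def r1_def r0_def by simp
  have each: "1/2 * c * (r1 * (a i)^2 - r0 * (b i)^2) + 1/2 * (\<Sum>(k,s)\<in>D. f k s * (g i k s)^2)
    + (1/2 * c * r1 * (a i - b i)^2 - 1/2 * (\<Sum>(k,s)\<in>D. f k s * (g i k s - b i)^2)
       + (a i - b i) * (\<Sum>(k,s)\<in>D. f k s * (g i k s - b i))) + (q * (nv $ i)) * a i = 0" for i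
    apply (rule kin_alg[OF finD Z])
    using mom unfolding D_def f_def c_def r1_def r0_def g_def a_def b_def by simp
  have R: "Rterm M S dt n \<sigma> i = 1/2 * c * r1 * (a i - b i)^2 - 1/2 * (\<Sum>(k,s)\<in>D. f k s * (g i k s - b i)^2)
       + (a i - b i) * (\<Sum>(k,s)\<in>D. f k s * (g i k s - b i))" for i
    unfolding Rterm_def D_def f_def c_def r1_def r0_def g_def a_def b_def by simp
  have sA: "(\<Sum>i\<in>UNIV. 1/2 * c * (r1 * (a i)^2 - r0 * (b i)^2))
     = 1/2 * c * (r1 * sqn (vel S (Suc n) \<sigma>) - r0 * sqn (vel S n \<sigma>))"
    unfolding sqn_def a_def b_def by (simp only: sum_distrib_left[symmetric] sum_subtractf)
  have sB: "(\<Sum>i\<in>UNIV. 1/2 * (\<Sum>(k,s)\<in>D. f k s * (g i k s)^2))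
     = 1/2 * (\<Sum>(k,s)\<in>D. f k s * sqn (vel_dual S n k \<sigma> s))"
    unfolding sqn_def g_def
    by (simp add: sum_distrib_left split_def sum.swap[of _ UNIV])
  have sP: "(\<Sum>i\<in>UNIV. (q * (nv $ i)) * a i) = q * (vel S (Suc n) \<sigma> \<bullet> nv)"
    unfolding inner_vec_def a_def by (simp add: sum_distrib_left mult_ac)
  have "(\<Sum>i\<in>UNIV. 1/2 * c * (r1 * (a i)^2 - r0 * (b i)^2) + 1/2 * (\<Sum>(k,s)\<in>D. f k s * (g i k s)^2)
    + Rterm M S dt n \<sigma> i + (q * (nv $ i)) * a i) = 0"
    using each R by simp
  then have "(\<Sum>i\<in>UNIV. 1/2 * c * (r1 * (a i)^2 - r0 * (b i)^2)) + (\<Sum>i\<in>UNIV. 1/2 * (\<Sum>(k,s)\<in>D. f k s * (g i k s)^2))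
    + (\<Sum>i\<in>UNIV. Rterm M S dt n \<sigma> i) + (\<Sum>i\<in>UNIV. (q * (nv $ i)) * a i) = 0"
    by (simp add: sum.distrib)
  then show ?thesis unfolding sA sB sP unfolding D_def f_def c_def r1_def r0_def by simp
qed



lemma gk_split:
  assumes m: "is_mesh M" and K: "K \<in> cells M" and s: "\<sigma> \<in> faces_of M K"
  shows "Gk M S n K \<sigma> = 1/2 * (1/2 * (\<Sum>(K',\<sigma>')\<in>dual_faces M \<sigma>. dual_flux S n \<sigma> K' \<sigma>' * sqn (vel_dual S n K' \<sigma> \<sigma>')))
     - 1/2 * (\<Sum>\<sigma>'\<in>{\<sigma>'. adj M K \<sigma> \<sigma>'}. dual_flux S n \<sigma> K \<sigma>' * sqn (vel_dual S n K \<sigma> \<sigma>'))"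
proof -
  define h where "h = (\<lambda>(L, \<sigma>'). dual_flux S n \<sigma> L \<sigma>' * sqn (vel_dual S n L \<sigma> \<sigma>'))"
  define A1 where "A1 = {(L, \<sigma>') \<in> dual_faces M \<sigma>. L = K}"
  define A2 where "A2 = {(L, \<sigma>') \<in> dual_faces M \<sigma>. L \<noteq> K}"
  have fin: "finite (dual_faces M \<sigma>)" using fin_dual[OF m] .
  have U: "dual_faces M \<sigma> = A1 \<union> A2" unfolding A1_def A2_def by auto
  have fin1: "finite A1" using fin unfolding A1_def by (rule rev_finite_subset) auto
  have fin2: "finite A2" using fin unfolding A2_def by (rule rev_finite_subset) auto
  have full: "sum h (dual_faces M \<sigma>) = sum h A1 + sum h A2"
    unfolding U by (rule sum.union_disjoint[OF fin1 fin2]) (auto simp: A1_def A2_def)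
  have A1i: "A1 = (\<lambda>\<sigma>'. (K, \<sigma>')) ` {\<sigma>'. adj M K \<sigma> \<sigma>'}"
    unfolding A1_def dual_faces_def using K s by (auto simp: cells_of_def)
  have s1: "sum h A1 = (\<Sum>\<sigma>'\<in>{\<sigma>'. adj M K \<sigma> \<sigma>'}. dual_flux S n \<sigma> K \<sigma>' * sqn (vel_dual S n K \<sigma> \<sigma>'))"
    unfolding A1i by (subst sum.reindex) (auto simp: inj_on_def h_def)
  have g: "Gk M S n K \<sigma> = - 1/4 * sum h A1 + 1/4 * sum h A2"
    unfolding Gk_def h_def A1_def A2_def by simp
  have "(\<Sum>(K',\<sigma>')\<in>dual_faces M \<sigma>. dual_flux S n \<sigma> K' \<sigma>' * sqn (vel_dual S n K' \<sigma> \<sigma>')) = sum h (dual_faces M \<sigma>)"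
    unfolding h_def by simp
  then show ?thesis unfolding g s1[symmetric] using full by linarith
qed

theorem mainTheorem4:
  fixes M :: "('c, 'f, 'd::finite) mesh"
    and S :: "('c, 'f, 'd) solution"
    and \<gamma> T :: real and N :: nat
    and rho0 e0 :: "real^'d \<Rightarrow> real" and u0 :: "real^'d \<Rightarrow> real^'d"
  assumes mesh: "is_mesh M"
    and N: "N \<ge> 2" and T: "T > 0" and gamma: "\<gamma> > 1"
    and rho0: "rho0 \<in> borel_measurable lebesgue" "\<exists>B. \<forall>x\<in>omega M. \<bar>rho0 x\<bar> \<le> B"
              "\<forall>x\<in>omega M. rho0 x > 0"
    and e0: "e0 \<in> borel_measurable lebesgue" "\<exists>B. \<forall>x\<in>omega M. \<bar>e0 x\<bar> \<le> B"
            "\<forall>x\<in>omega M. e0 x > 0"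
    and u0: "u0 \<in> borel_measurable lebesgue" "\<exists>B. \<forall>x\<in>omega M. norm (u0 x) \<le> B"
    and sol: "is_solution M \<gamma> T N rho0 e0 u0 S"
  shows "\<forall>n. n \<le> N - 2 \<longrightarrow> (\<forall>K\<in>cells M.
     cmeas M K / (T / real N) *
        ((rho S (n+2) K * ener S (n+2) K + kin_energy M S (n+1) K)
         - (rho S (n+1) K * ener S (n+1) K + kin_energy M S n K))
     + (\<Sum>\<sigma>\<in>faces_of M K. flux M S (n+1) K \<sigma> * ener_face S (n+1) \<sigma> + Gk M S n K \<sigma>)
     + (\<Sum>\<sigma>\<in>faces_of M K \<inter> interior_faces M.
          face_meas M \<sigma> * ((pres S (n+1) K + pres S (n+1) (neighbor M K \<sigma>)) / 2)
            * (vel S (n+1) \<sigma> \<bullet> normal M K \<sigma>))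
     = 0)"
proof (intro allI impI ballI)
  fix n K assume nN: "n \<le> N - 2" and K: "K \<in> cells M"
  define dt where "dt = T / real N"
  have dt: "dt > 0" unfolding dt_def using T N by simp
  have n1: "Suc n < N" "n < N" "Suc n \<le> N" "Suc (Suc n) \<le> N" using nN N by auto
  note s = sol[unfolded is_solution_def Let_def, folded dt_def]
  note c5 = s[THEN conjunct2, THEN conjunct2, THEN conjunct2, THEN conjunct2, THEN conjunct1]
  note c6 = s[THEN conjunct2, THEN conjunct2, THEN conjunct2, THEN conjunct2, THEN conjunct2, THEN conjunct1]
  note c8 = s[THEN conjunct2, THEN conjunct2, THEN conjunct2, THEN conjunct2, THEN conjunct2, THEN conjunct2,
     THEN conjunct2, THEN conjunct1]
  note c9 = s[THEN conjunct2, THEN conjunct2, THEN conjunct2, THEN conjunct2, THEN conjunct2, THEN conjunct2,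
     THEN conjunct2, THEN conjunct2, THEN conjunct1]
  note c10 = s[THEN conjunct2, THEN conjunct2, THEN conjunct2, THEN conjunct2, THEN conjunct2, THEN conjunct2,
     THEN conjunct2, THEN conjunct2, THEN conjunct2, THEN conjunct1]
  note c11 = s[THEN conjunct2, THEN conjunct2, THEN conjunct2, THEN conjunct2, THEN conjunct2, THEN conjunct2,
     THEN conjunct2, THEN conjunct2, THEN conjunct2, THEN conjunct2, THEN conjunct1]
  note c12 = s[THEN conjunct2, THEN conjunct2, THEN conjunct2, THEN conjunct2, THEN conjunct2, THEN conjunct2,
     THEN conjunct2, THEN conjunct2, THEN conjunct2, THEN conjunct2, THEN conjunct2]
  have finF: "finite (faces_of M K)" using fin_faces[OF mesh K] .
  have cpos: "cmeas M K > 0" using mesh_cmeas[OF mesh K] .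
  have mass: "\<forall>K\<in>cells M. cmeas M K / dt * (rho S (Suc n) K - rho S n K) + (\<Sum>\<sigma>\<in>faces_of M K. flux M S n K \<sigma>) = 0"
    using c8 n1(2) by auto
  have bn: "\<forall>K\<in>cells M. \<forall>\<sigma>\<in>faces_of M K. flux M S n K \<sigma> + (\<Sum>\<sigma>'\<in>{\<sigma>'. adj M K \<sigma> \<sigma>'}. dual_flux S n \<sigma> K \<sigma>')
          = (1 / real (zeta M)) * (\<Sum>\<sigma>'\<in>faces_of M K. flux M S n K \<sigma>')"
    using c6 n1(2) by auto
  have energy: "cmeas M K / dt * (rho S (Suc (Suc n)) K * ener S (Suc (Suc n)) K - rho S (Suc n) K * ener S (Suc n) K)
          + (\<Sum>\<sigma>\<in>faces_of M K. flux M S (Suc n) K \<sigma> * ener_face S (Suc n) \<sigma>)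
          + cmeas M K * pres S (Suc n) K * div_u M S (Suc n) K = source M S dt (Suc n) K"
    using c8 n1(1) K by auto
  define KE where "KE = (\<lambda>\<sigma>. 1/2 * (dual_meas M \<sigma> / dt) * (rho_dual M S (Suc n) \<sigma> * sqn (vel S (Suc n) \<sigma>) - rho_dual M S n \<sigma> * sqn (vel S n \<sigma>)))"
  define FL where "FL = (\<lambda>\<sigma>. 1/2 * (\<Sum>(K',\<sigma>')\<in>dual_faces M \<sigma>. dual_flux S n \<sigma> K' \<sigma>' * sqn (vel_dual S n K' \<sigma> \<sigma>')))"
  define RS where "RS = (\<lambda>\<sigma>. \<Sum>i\<in>UNIV. Rterm M S dt n \<sigma> i)"
  define W where "W = (\<lambda>\<sigma>. vel S (Suc n) \<sigma> \<bullet> normal M K \<sigma>)"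
  define PR where "PR = (\<lambda>\<sigma>. if \<sigma> \<in> interior_faces M then face_meas M \<sigma> * (pres S (Suc n) (neighbor M K \<sigma>) - pres S (Suc n) K) * W \<sigma> else 0)"
  have Wext: "W \<sigma> = 0" if "\<sigma> \<in> faces_of M K" "\<sigma> \<notin> interior_faces M" for \<sigma>
  proof -
    have "\<sigma> \<in> faces M" using that K unfolding faces_def by auto
    then have "\<sigma> \<in> faces_of M K \<inter> exterior_faces M" using that unfolding exterior_faces_def by auto
    then show ?thesis using c11 n1(3) K unfolding W_def by auto
  qed
  have Eq: "KE \<sigma> + FL \<sigma> + RS \<sigma> + PR \<sigma> = 0" if sK: "\<sigma> \<in> faces_of M K" for \<sigma>
  proof -
    have sf: "\<sigma> \<in> faces M" using sK K unfolding faces_def by auto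
    have dm: "(\<Sum>(K',\<sigma>')\<in>dual_faces M \<sigma>. dual_flux S n \<sigma> K' \<sigma>')
      = - (dual_meas M \<sigma> / dt) * (rho_dual M S (Suc n) \<sigma> - rho_dual M S n \<sigma>)"
      by (rule dual_mass[OF mesh sf dt mass bn])
    show ?thesis
    proof (cases "\<sigma> \<in> interior_faces M")
      case True
      define L where "L = neighbor M K \<sigma>"
      have L: "L \<in> cells_of M \<sigma>" "L \<noteq> K" using neighbor_prop[OF mesh K sK True] unfolding L_def by auto
      have Kc: "K \<in> cells_of M \<sigma>" using K sK by (auto simp: cells_of_def)
      have mom: "\<forall>i. dual_meas M \<sigma> / dt * (rho_dual M S (Suc n) \<sigma> * (vel S (Suc n) \<sigma> $ i) - rho_dual M S n \<sigma> * (vel S n \<sigma> $ i))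
        + (\<Sum>(K', \<sigma>')\<in>dual_faces M \<sigma>. dual_flux S n \<sigma> K' \<sigma>' * (vel_dual S n K' \<sigma> \<sigma>' $ i))
        + (face_meas M \<sigma> * (pres S (Suc n) L - pres S (Suc n) K)) * (normal M K \<sigma> $ i) = 0"
        using c10 n1(2) True Kc L by auto
      have "KE \<sigma> + FL \<sigma> + RS \<sigma> + (face_meas M \<sigma> * (pres S (Suc n) L - pres S (Suc n) K)) * W \<sigma> = 0"
        unfolding KE_def FL_def RS_def W_def by (rule sigma_identity[OF fin_dual[OF mesh] dm mom])
      then show ?thesis unfolding PR_def L_def using True by simp
    next
      case False
      have se: "\<sigma> \<in> faces_of M K \<inter> exterior_faces M" using sK sf False unfolding exterior_faces_def by auto
      have mom: "\<forall>i. dual_meas M \<sigma> / dt * (rho_dual M S (Suc n) \<sigma> * (vel S (Suc n) \<sigma> $ i) - rho_dual M S n \<sigma> * (vel S n \<sigma> $ i))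
        + (\<Sum>(K', \<sigma>')\<in>dual_faces M \<sigma>. dual_flux S n \<sigma> K' \<sigma>' * (vel_dual S n K' \<sigma> \<sigma>' $ i))
        + bnd_pres S (Suc n) \<sigma> * (normal M K \<sigma> $ i) = 0"
        using c12 n1(2) K se by auto
      have "KE \<sigma> + FL \<sigma> + RS \<sigma> + bnd_pres S (Suc n) \<sigma> * W \<sigma> = 0"
        unfolding KE_def FL_def RS_def W_def by (rule sigma_identity[OF fin_dual[OF mesh] dm mom])
      then show ?thesis unfolding PR_def using False Wext[OF sK False] by simp
    qed
  qed
  have sumE: "(\<Sum>\<sigma>\<in>faces_of M K. KE \<sigma>) + (\<Sum>\<sigma>\<in>faces_of M K. FL \<sigma>) + (\<Sum>\<sigma>\<in>faces_of M K. RS \<sigma>)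
      + (\<Sum>\<sigma>\<in>faces_of M K. PR \<sigma>) = 0"
  proof -
    have "(\<Sum>\<sigma>\<in>faces_of M K. KE \<sigma> + FL \<sigma> + RS \<sigma> + PR \<sigma>) = 0" using Eq by simp
    then show ?thesis by (simp add: sum.distrib)
  qed
  have src: "source M S dt (Suc n) K = 1/2 * (\<Sum>\<sigma>\<in>faces_of M K. RS \<sigma>)"
    unfolding source_def RS_def by (simp add: sum.swap[of _ UNIV])
  have divu: "cmeas M K * pres S (Suc n) K * div_u M S (Suc n) K
      = (\<Sum>\<sigma>\<in>faces_of M K. face_meas M \<sigma> * pres S (Suc n) K * W \<sigma>)"
  proof -
    have "cmeas M K * pres S (Suc n) K * div_u M S (Suc n) K
      = pres S (Suc n) K * (\<Sum>\<sigma>\<in>faces_of M K. face_meas M \<sigma> * (vel S (Suc n) \<sigma> \<bullet> normal M K \<sigma>))"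
      unfolding div_u_def using cpos by simp
    also have "\<dots> = (\<Sum>\<sigma>\<in>faces_of M K. face_meas M \<sigma> * pres S (Suc n) K * W \<sigma>)"
      unfolding W_def by (simp add: sum_distrib_left mult_ac)
    finally show ?thesis .
  qed
  have kin: "cmeas M K / dt * (kin_energy M S (Suc n) K - kin_energy M S n K) = 1/2 * (\<Sum>\<sigma>\<in>faces_of M K. KE \<sigma>)"
  proof -
    have "cmeas M K / dt * (kin_energy M S (Suc n) K - kin_energy M S n K)
      = 1/4 * ((\<Sum>\<sigma>\<in>faces_of M K. dual_meas M \<sigma> * rho_dual M S (Suc n) \<sigma> * sqn (vel S (Suc n) \<sigma>))
              - (\<Sum>\<sigma>\<in>faces_of M K. dual_meas M \<sigma> * rho_dual M S n \<sigma> * sqn (vel S n \<sigma>))) / dt"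
    proof -
      have gen: "cmeas M K / dt * ((1/4 * X1) / cmeas M K - (1/4 * X0) / cmeas M K) = 1/4 * (X1 - X0) / dt" for X1 X0
        using cpos dt by (simp add: field_simps)
      show ?thesis unfolding kin_energy_def by (rule gen)
    qed
    also have "\<dots> = 1/2 * (\<Sum>\<sigma>\<in>faces_of M K. KE \<sigma>)"
      unfolding KE_def by (simp add: sum_subtractf[symmetric] sum_distrib_left sum_divide_distrib field_simps)
    finally show ?thesis .
  qed
  have gk: "(\<Sum>\<sigma>\<in>faces_of M K. Gk M S n K \<sigma>) = 1/2 * (\<Sum>\<sigma>\<in>faces_of M K. FL \<sigma>)"
  proof -
    have z: "(\<Sum>\<sigma>\<in>faces_of M K. \<Sum>\<sigma>'\<in>{\<sigma>'. adj M K \<sigma> \<sigma>'}. dual_flux S n \<sigma> K \<sigma>' * sqn (vel_dual S n K \<sigma> \<sigma>')) = 0"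
    proof (rule gk_zero[OF mesh K])
      show "\<forall>\<sigma> \<sigma>'. adj M K \<sigma> \<sigma>' \<longrightarrow> dual_flux S n \<sigma> K \<sigma>' = - dual_flux S n \<sigma>' K \<sigma>"
        using c5 n1(2) by blast
      show "\<forall>\<sigma> \<sigma>'. adj M K \<sigma> \<sigma>' \<longrightarrow> sqn (vel_dual S n K \<sigma> \<sigma>') = sqn (vel_dual S n K \<sigma>' \<sigma>)"
      proof (intro allI impI)
        fix a b assume "adj M K a b"
        then have "vel_dual S n K a b = vel_dual S n K b a" using c9 n1(2) by blast
        then show "sqn (vel_dual S n K a b) = sqn (vel_dual S n K b a)" by simp
      qed
    qed
    have "(\<Sum>\<sigma>\<in>faces_of M K. Gk M S n K \<sigma>) = (\<Sum>\<sigma>\<in>faces_of M K. 1/2 * FL \<sigma>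
        - 1/2 * (\<Sum>\<sigma>'\<in>{\<sigma>'. adj M K \<sigma> \<sigma>'}. dual_flux S n \<sigma> K \<sigma>' * sqn (vel_dual S n K \<sigma> \<sigma>')))"
      apply (rule sum.cong[OF refl]) unfolding FL_def using gk_split[OF mesh K] by simp
    also have "\<dots> = 1/2 * (\<Sum>\<sigma>\<in>faces_of M K. FL \<sigma>)"
      by (simp only: sum_subtractf sum_distrib_left[symmetric] z)
    finally show ?thesis .
  qed
  have pr: "(\<Sum>\<sigma>\<in>faces_of M K \<inter> interior_faces M.
          face_meas M \<sigma> * ((pres S (Suc n) K + pres S (Suc n) (neighbor M K \<sigma>)) / 2) * W \<sigma>)
     = (\<Sum>\<sigma>\<in>faces_of M K. face_meas M \<sigma> * pres S (Suc n) K * W \<sigma>) + 1/2 * (\<Sum>\<sigma>\<in>faces_of M K. PR \<sigma>)"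
  proof -
    have "(\<Sum>\<sigma>\<in>faces_of M K \<inter> interior_faces M.
          face_meas M \<sigma> * ((pres S (Suc n) K + pres S (Suc n) (neighbor M K \<sigma>)) / 2) * W \<sigma>)
       = (\<Sum>\<sigma>\<in>faces_of M K. if \<sigma> \<in> interior_faces M then
          face_meas M \<sigma> * ((pres S (Suc n) K + pres S (Suc n) (neighbor M K \<sigma>)) / 2) * W \<sigma> else 0)"
      by (rule sum.inter_restrict[OF finF])
    also have "\<dots> = (\<Sum>\<sigma>\<in>faces_of M K. face_meas M \<sigma> * pres S (Suc n) K * W \<sigma> + 1/2 * PR \<sigma>)"
    proof (rule sum.cong[OF refl])
      fix \<sigma> assume sK: "\<sigma> \<in> faces_of M K"
      show "(if \<sigma> \<in> interior_faces M then
          face_meas M \<sigma> * ((pres S (Suc n) K + pres S (Suc n) (neighbor M K \<sigma>)) / 2) * W \<sigma> else 0)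
          = face_meas M \<sigma> * pres S (Suc n) K * W \<sigma> + 1/2 * PR \<sigma>"
        using Wext[OF sK] unfolding PR_def by (auto simp: field_simps)
    qed
    also have "\<dots> = (\<Sum>\<sigma>\<in>faces_of M K. face_meas M \<sigma> * pres S (Suc n) K * W \<sigma>) + 1/2 * (\<Sum>\<sigma>\<in>faces_of M K. PR \<sigma>)"
      by (simp add: sum.distrib sum_distrib_left)
    finally show ?thesis .
  qed
  have e2: "n + 2 = Suc (Suc n)" "n + 1 = Suc n" by simp_all
  have split: "cmeas M K / dt *
        ((rho S (Suc (Suc n)) K * ener S (Suc (Suc n)) K + kin_energy M S (Suc n) K)
         - (rho S (Suc n) K * ener S (Suc n) K + kin_energy M S n K))
      = cmeas M K / dt * (rho S (Suc (Suc n)) K * ener S (Suc (Suc n)) K - rho S (Suc n) K * ener S (Suc n) K)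
        + cmeas M K / dt * (kin_energy M S (Suc n) K - kin_energy M S n K)"
    by (simp add: algebra_simps)
  show "cmeas M K / (T / real N) *
        ((rho S (n+2) K * ener S (n+2) K + kin_energy M S (n+1) K)
         - (rho S (n+1) K * ener S (n+1) K + kin_energy M S n K))
     + (\<Sum>\<sigma>\<in>faces_of M K. flux M S (n+1) K \<sigma> * ener_face S (n+1) \<sigma> + Gk M S n K \<sigma>)
     + (\<Sum>\<sigma>\<in>faces_of M K \<inter> interior_faces M.
          face_meas M \<sigma> * ((pres S (n+1) K + pres S (n+1) (neighbor M K \<sigma>)) / 2)
            * (vel S (n+1) \<sigma> \<bullet> normal M K \<sigma>))
     = 0"
    unfolding dt_def[symmetric] e2 split sum.distrib kin gk
    using energy divu[unfolded W_def] src sumE pr[unfolded W_def] by linarith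
qed


end
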